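(* Let $C=(C_1,\dots,C_K)$ with $C_k:=\mathbb{E}[Y_k\mid S_k]$ (classwise-calibrated scores). For $d$ equal to either the Brier divergence $d(P,R)=\sum_{k=1}^K(P_k-R_k)^2$ or the log-loss divergence $d(P,R)=\sum_{k=1}^K R_k\log(R_k/P_k)$ (with the convention $0\log 0=0$), $$\mathbb{E}[d(S,Y)]=\mathbb{E}[d(S,C)]+\mathbb{E}[d(C,Q)]+\mathbb{E}[d(Q,Y)],$$ where the expectation is over $X$ and $Y$.
   Context: Let $(X,Y)$ be jointly distributed with $X\in\mathcal{X}$ and $Y=(Y_1,\dots,Y_K)\in\{e_1,\dots,e_K\}$ (one-hot vectors of $\mathbb{R}^K$); $Q_k:=P(Y=e_k\mid X)$, $Q=(Q_1,\dots,Q_K)$; $S=(S_1,\dots,S_K)=f(X)$ in the probability simplex for a classifier $f$. All required expectations are assumed to exist and be finite. *)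

theory Defs
  imports "HOL-Probability.Probability"
begin

text \<open>Vectors of \<open>R^K\<close> are represented as functions \<open>nat \<Rightarrow> real\<close>, only the
  coordinates \<open>0..<K\<close> being relevant.\<close>

definition brier :: "nat \<Rightarrow> (nat \<Rightarrow> real) \<Rightarrow> (nat \<Rightarrow> real) \<Rightarrow> real" where
  "brier K P R = (\<Sum>k<K. (P k - R k)^2)"

text \<open>Log-loss divergence; the convention \<open>0 log 0 = 0\<close> holds automatically since
  \<open>0 * t = 0\<close>.\<close>
definition logloss :: "nat \<Rightarrow> (nat \<Rightarrow> real) \<Rightarrow> (nat \<Rightarrow> real) \<Rightarrow> real" where
  "logloss K P R = (\<Sum>k<K. R k * ln (R k / P k))"

end

theory Submission imports Defs begin

lemma (in sigma_finite_subalgebra) cond_exp_intg_rev: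
  fixes g Y :: "'a \<Rightarrow> real"
  assumes [measurable]: "g \<in> borel_measurable F" "Y \<in> borel_measurable M"
    and Ypos: "\<forall>x\<in>space M. 0 \<le> Y x" and intY: "integrable M Y"
    and int: "integrable M (\<lambda>x. g x * real_cond_exp M F Y x)"
  shows "integrable M (\<lambda>x. g x * Y x)"
    "(\<integral>x. g x * Y x \<partial>M) = (\<integral>x. g x * real_cond_exp M F Y x \<partial>M)"
proof -
  have gM[measurable]: "g \<in> borel_measurable M" by (rule measurable_from_subalg[OF subalg]) simp
  have "AE x in M. ennreal (- Y x) = 0" using Ypos by (auto simp: ennreal_neg)
  then have "AE x in M. nn_cond_exp M F (\<lambda>x. ennreal (- Y x)) x = nn_cond_exp M F (\<lambda>x. 0) x"
    by (intro nn_cond_exp_cong) auto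
  moreover have "AE x in M. 0 = nn_cond_exp M F (\<lambda>x. 0) x"
    by (rule nn_cond_exp_F_meas, auto)
  ultimately have ae1: "AE x in M. real_cond_exp M F Y x = enn2real (nn_cond_exp M F (\<lambda>x. ennreal (Y x)) x)"
    unfolding real_cond_exp_def by auto
  have "(\<integral>\<^sup>+x. 1 * nn_cond_exp M F (\<lambda>x. ennreal (Y x)) x \<partial>M) = (\<integral>\<^sup>+x. 1 * ennreal (Y x) \<partial>M)"
    by (rule nn_cond_exp_intg) auto
  also have "\<dots> = (\<integral>\<^sup>+x. ennreal (norm (Y x)) \<partial>M)"
    using Ypos by (intro nn_integral_cong) auto
  also have "\<dots> < \<infinity>" using intY
    by (simp add: integrable_iff_bounded)
  finally have "AE x in M. nn_cond_exp M F (\<lambda>x. ennreal (Y x)) x \<noteq> \<infinity>"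
    by (intro nn_integral_PInf_AE) auto
  with ae1 have ae2: "AE x in M. ennreal (real_cond_exp M F Y x) = nn_cond_exp M F (\<lambda>x. ennreal (Y x)) x
      \<and> real_cond_exp M F Y x \<ge> 0"
    by eventually_elim (auto simp: ennreal_enn2real_if)
  have "(\<integral>\<^sup>+x. ennreal (norm (g x * Y x)) \<partial>M) = (\<integral>\<^sup>+x. ennreal \<bar>g x\<bar> * ennreal (Y x) \<partial>M)"
    using Ypos by (intro nn_integral_cong) (auto simp: abs_mult ennreal_mult)
  also have "\<dots> = (\<integral>\<^sup>+x. ennreal \<bar>g x\<bar> * nn_cond_exp M F (\<lambda>x. ennreal (Y x)) x \<partial>M)"
    by (rule nn_cond_exp_intg[symmetric]) auto
  also have "\<dots> = (\<integral>\<^sup>+x. ennreal (norm (g x * real_cond_exp M F Y x)) \<partial>M)"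
    using ae2 by (intro nn_integral_cong_AE) (auto simp: abs_mult ennreal_mult)
  also have "\<dots> < \<infinity>" using int by (simp add: integrable_iff_bounded)
  finally show i: "integrable M (\<lambda>x. g x * Y x)"
    by (intro integrableI_bounded) auto
  show "(\<integral>x. g x * Y x \<partial>M) = (\<integral>x. g x * real_cond_exp M F Y x \<partial>M)"
    using real_cond_exp_intg(2)[OF i] by simp
qed


lemma xlnx_lower:
  fixes x y :: real
  assumes "0 \<le> x" "0 \<le> y" "x > 0 \<longrightarrow> y > 0"
  shows "x - y \<le> x * ln (x / y)"
proof (cases "x = 0")
  case True then show ?thesis using assms by simp
next
  case False
  then have x: "x > 0" and y: "y > 0" using assms by auto
  have "ln (y / x) \<le> y / x - 1" using x y by (intro ln_le_minus_one) auto
  moreover have "ln (x / y) = - ln (y / x)" using x y by (simp add: ln_div)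
  ultimately have "1 - y / x \<le> ln (x / y)" by simp
  then have "x * (1 - y / x) \<le> x * ln (x / y)" using x by (intro mult_left_mono) auto
  moreover have "x * (1 - y / x) = x - y" using x by (simp add: field_simps)
  ultimately show ?thesis by linarith
qed

lemma each_int:
  fixes h :: "nat \<Rightarrow> 'a \<Rightarrow> real"
  assumes "finite_measure M" and meas: "\<forall>k<K. h k \<in> borel_measurable M"
    and lb: "AE \<omega> in M. \<forall>k<K. h k \<omega> \<ge> -1"
    and int: "integrable M (\<lambda>\<omega>. \<Sum>k<K. h k \<omega>)" and k: "k < K"
  shows "integrable M (h k)"
proof -
  interpret finite_measure M by fact
  have i2: "integrable M (\<lambda>\<omega>. \<bar>\<Sum>k<K. h k \<omega>\<bar> + real K)"
    using int by (intro Bochner_Integration.integrable_add) auto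
  show ?thesis
  proof (rule Bochner_Integration.integrable_bound[OF i2])
    show "h k \<in> borel_measurable M" using meas k by auto
    show "AE x in M. norm (h k x) \<le> norm (\<bar>\<Sum>k<K. h k x\<bar> + real K)"
      using lb
    proof eventually_elim
      case (elim x)
      have "h k x + 1 \<le> (\<Sum>j<K. h j x + 1)"
        using elim k by (intro member_le_sum) auto
      also have "\<dots> = (\<Sum>j<K. h j x) + real K" by (simp add: sum.distrib)
      finally have "h k x + 1 \<le> (\<Sum>j<K. h j x) + real K" .
      moreover have "h k x \<ge> -1" using elim k by auto
      moreover have "real K \<ge> 1" using k by simp
      ultimately show ?case by auto
    qed
  qed
qed

lemma (in sigma_finite_subalgebra) ce_bdd:
  fixes h y :: "'a \<Rightarrow> real"
  assumes "finite_measure M" and [measurable]: "h \<in> borel_measurable F" "y \<in> borel_measurable M"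
    and hb: "AE \<omega> in M. \<bar>h \<omega>\<bar> \<le> B" and yb: "\<forall>\<omega>\<in>space M. \<bar>y \<omega>\<bar> \<le> 1"
  shows "(\<integral>\<omega>. h \<omega> * real_cond_exp M F y \<omega> \<partial>M) = (\<integral>\<omega>. h \<omega> * y \<omega> \<partial>M)"
proof -
  have [measurable]: "h \<in> borel_measurable M" by (rule measurable_from_subalg[OF subalg]) simp
  have "integrable M (\<lambda>\<omega>. h \<omega> * y \<omega>)"
  proof (rule finite_measure.integrable_const_bound[OF assms(1), where B=B])
    show "AE x in M. norm (h x * y x) \<le> B" using hb AE_space
    proof eventually_elim
      case (elim x)
      then have "\<bar>y x\<bar> \<le> 1" "0 \<le> B" using yb by auto
      then show ?case using elim
        using yb mult_mono[of "\<bar>h x\<bar>" B "\<bar>y x\<bar>" 1] by (auto simp: abs_mult)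
    qed
  qed simp
  then show ?thesis by (rule real_cond_exp_intg(2)) auto
qed


lemma unit_bounds:
  fixes a b u v :: real
  assumes "0 \<le> a" "a \<le> 1" "0 \<le> b" "b \<le> 1" "0 \<le> u" "u \<le> 1" "0 \<le> v" "v \<le> 1"
  shows "\<bar>(a - b) * (u - v)\<bar> \<le> 1" "\<bar>(a - b) * u\<bar> \<le> 1" "\<bar>(a - b)^2\<bar> \<le> 1"
proof -
  have 1: "\<bar>a - b\<bar> \<le> 1" "\<bar>u - v\<bar> \<le> 1" "\<bar>u\<bar> \<le> 1" using assms by auto
  show "\<bar>(a - b) * (u - v)\<bar> \<le> 1" unfolding abs_mult using 1 by (intro mult_le_one) auto
  show "\<bar>(a - b) * u\<bar> \<le> 1" unfolding abs_mult using 1 by (intro mult_le_one) auto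
  show "\<bar>(a - b)^2\<bar> \<le> 1" unfolding power2_eq_square abs_mult using 1 by (intro mult_le_one) auto
qed

lemma brier_one:
  fixes s y q c :: "'a \<Rightarrow> real"
  assumes P: "prob_space M"
    and sF: "sigma_finite_subalgebra M F" and sG: "sigma_finite_subalgebra M G" and FG: "subalgebra F G"
    and [measurable]: "s \<in> borel_measurable G" "y \<in> borel_measurable M"
    and y01: "\<forall>\<omega>\<in>space M. 0 \<le> y \<omega> \<and> y \<omega> \<le> 1" and s01: "\<forall>\<omega>\<in>space M. 0 \<le> s \<omega> \<and> s \<omega> \<le> 1"
    and qdef: "q = real_cond_exp M F y" and cdef: "c = real_cond_exp M G y"
  shows "integrable M (\<lambda>\<omega>. (s \<omega> - y \<omega>)^2)" "integrable M (\<lambda>\<omega>. (s \<omega> - c \<omega>)^2)"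
    "integrable M (\<lambda>\<omega>. (c \<omega> - q \<omega>)^2)" "integrable M (\<lambda>\<omega>. (q \<omega> - y \<omega>)^2)"
    "(\<integral>\<omega>. (s \<omega> - y \<omega>)^2 \<partial>M) = (\<integral>\<omega>. (s \<omega> - c \<omega>)^2 \<partial>M) + (\<integral>\<omega>. (c \<omega> - q \<omega>)^2 \<partial>M)
       + (\<integral>\<omega>. (q \<omega> - y \<omega>)^2 \<partial>M)"
proof -
  interpret prob_space M by fact
  have fm: "finite_measure M" by unfold_locales
  have subF: "subalgebra M F" using sF by (simp add: sigma_finite_subalgebra_def)
  have subG: "subalgebra M G" using sG by (simp add: sigma_finite_subalgebra_def)
  have sFm[measurable]: "s \<in> borel_measurable F" by (rule measurable_from_subalg[OF FG]) simp
  have [measurable]: "s \<in> borel_measurable M" by (rule measurable_from_subalg[OF subF]) simp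
  have qF[measurable]: "q \<in> borel_measurable F" unfolding qdef by simp
  have [measurable]: "q \<in> borel_measurable M" unfolding qdef by simp
  have cG[measurable]: "c \<in> borel_measurable G" unfolding cdef by simp
  have cF[measurable]: "c \<in> borel_measurable F" by (rule measurable_from_subalg[OF FG cG])
  have [measurable]: "c \<in> borel_measurable M" unfolding cdef by simp
  have yi: "integrable M y"
    by (rule integrable_const_bound[where B=1]) (use y01 in auto)
  have ay0: "AE \<omega> in M. y \<omega> \<ge> 0" and ay1: "AE \<omega> in M. y \<omega> \<le> 1" using y01 by auto
  have qb: "AE \<omega> in M. 0 \<le> q \<omega> \<and> q \<omega> \<le> 1"
    using sigma_finite_subalgebra.real_cond_exp_ge_c[OF sF yi ay0]
      sigma_finite_subalgebra.real_cond_exp_le_c[OF sF yi ay1] unfolding qdef by auto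
  have cb: "AE \<omega> in M. 0 \<le> c \<omega> \<and> c \<omega> \<le> 1"
    using sigma_finite_subalgebra.real_cond_exp_ge_c[OF sG yi ay0]
      sigma_finite_subalgebra.real_cond_exp_le_c[OF sG yi ay1] unfolding cdef by auto
  have allb: "AE \<omega> in M. 0 \<le> q \<omega> \<and> q \<omega> \<le> 1 \<and> 0 \<le> c \<omega> \<and> c \<omega> \<le> 1 \<and> 0 \<le> s \<omega> \<and> s \<omega> \<le> 1
      \<and> 0 \<le> y \<omega> \<and> y \<omega> \<le> 1"
    using qb cb AE_space by eventually_elim (use y01 s01 in auto)
  have bnds: "AE \<omega> in M. \<bar>(s \<omega> - y \<omega>)^2\<bar> \<le> 1 \<and> \<bar>(s \<omega> - c \<omega>)^2\<bar> \<le> 1 \<and>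
     \<bar>(c \<omega> - q \<omega>)^2\<bar> \<le> 1 \<and> \<bar>(q \<omega> - y \<omega>)^2\<bar> \<le> 1 \<and> \<bar>(s \<omega> - q \<omega>) * q \<omega>\<bar> \<le> 1 \<and>
     \<bar>(s \<omega> - q \<omega>) * y \<omega>\<bar> \<le> 1 \<and> \<bar>(s \<omega> - c \<omega>) * c \<omega>\<bar> \<le> 1 \<and> \<bar>(s \<omega> - c \<omega>) * q \<omega>\<bar> \<le> 1"
    using allb by (rule eventually_mono) (intro conjI; rule unit_bounds(2,3); auto)
  have i1: "integrable M (\<lambda>\<omega>. (s \<omega> - y \<omega>)^2)"
    by (rule integrable_const_bound[where B=1]) (use bnds in \<open>auto elim!: eventually_mono\<close>)
  have i2: "integrable M (\<lambda>\<omega>. (s \<omega> - c \<omega>)^2)"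
    by (rule integrable_const_bound[where B=1]) (use bnds in \<open>auto elim!: eventually_mono\<close>)
  have i3: "integrable M (\<lambda>\<omega>. (c \<omega> - q \<omega>)^2)"
    by (rule integrable_const_bound[where B=1]) (use bnds in \<open>auto elim!: eventually_mono\<close>)
  have i4: "integrable M (\<lambda>\<omega>. (q \<omega> - y \<omega>)^2)"
    by (rule integrable_const_bound[where B=1]) (use bnds in \<open>auto elim!: eventually_mono\<close>)
  have j1: "integrable M (\<lambda>\<omega>. (s \<omega> - q \<omega>) * q \<omega>)"
    by (rule integrable_const_bound[where B=1]) (use bnds in \<open>auto elim!: eventually_mono\<close>)
  have j2: "integrable M (\<lambda>\<omega>. (s \<omega> - q \<omega>) * y \<omega>)"
    by (rule integrable_const_bound[where B=1]) (use bnds in \<open>auto elim!: eventually_mono\<close>)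
  have j3: "integrable M (\<lambda>\<omega>. (s \<omega> - c \<omega>) * c \<omega>)"
    by (rule integrable_const_bound[where B=1]) (use bnds in \<open>auto elim!: eventually_mono\<close>)
  have j4: "integrable M (\<lambda>\<omega>. (s \<omega> - c \<omega>) * q \<omega>)"
    by (rule integrable_const_bound[where B=1]) (use bnds in \<open>auto elim!: eventually_mono\<close>)
  have yb1: "\<forall>\<omega>\<in>space M. \<bar>y \<omega>\<bar> \<le> 1" using y01 by auto
  have e1: "(\<integral>\<omega>. (s \<omega> - q \<omega>) * q \<omega> \<partial>M) = (\<integral>\<omega>. (s \<omega> - q \<omega>) * y \<omega> \<partial>M)"
    using sigma_finite_subalgebra.ce_bdd[OF sF fm _ _ eventually_mono[OF allb, of "\<lambda>\<omega>. \<bar>s \<omega> - q \<omega>\<bar> \<le> 1"] yb1]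
    unfolding qdef[symmetric] by (auto simp: abs_le_iff)
  have e2: "(\<integral>\<omega>. (s \<omega> - c \<omega>) * c \<omega> \<partial>M) = (\<integral>\<omega>. (s \<omega> - c \<omega>) * y \<omega> \<partial>M)"
    using sigma_finite_subalgebra.ce_bdd[OF sG fm _ _ eventually_mono[OF allb, of "\<lambda>\<omega>. \<bar>s \<omega> - c \<omega>\<bar> \<le> 1"] yb1]
    unfolding cdef[symmetric] by (auto simp: abs_le_iff)
  have e3: "(\<integral>\<omega>. (s \<omega> - c \<omega>) * q \<omega> \<partial>M) = (\<integral>\<omega>. (s \<omega> - c \<omega>) * y \<omega> \<partial>M)"
    using sigma_finite_subalgebra.ce_bdd[OF sF fm _ _ eventually_mono[OF allb, of "\<lambda>\<omega>. \<bar>s \<omega> - c \<omega>\<bar> \<le> 1"] yb1]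
    unfolding qdef[symmetric] by (auto simp: abs_le_iff)
  have "(\<integral>\<omega>. (s \<omega> - y \<omega>)^2 \<partial>M) = (\<integral>\<omega>. (s \<omega> - c \<omega>)^2 + (c \<omega> - q \<omega>)^2 + (q \<omega> - y \<omega>)^2
      + 2 * ((s \<omega> - q \<omega>) * q \<omega> - (s \<omega> - q \<omega>) * y \<omega>)
      + 2 * ((s \<omega> - c \<omega>) * c \<omega> - (s \<omega> - c \<omega>) * q \<omega>) \<partial>M)"
    by (rule Bochner_Integration.integral_cong) (auto simp: power2_eq_square algebra_simps)
  also have "\<dots> = (\<integral>\<omega>. (s \<omega> - c \<omega>)^2 \<partial>M) + (\<integral>\<omega>. (c \<omega> - q \<omega>)^2 \<partial>M) + (\<integral>\<omega>. (q \<omega> - y \<omega>)^2 \<partial>M)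
      + 2 * ((\<integral>\<omega>. (s \<omega> - q \<omega>) * q \<omega> \<partial>M) - (\<integral>\<omega>. (s \<omega> - q \<omega>) * y \<omega> \<partial>M))
      + 2 * ((\<integral>\<omega>. (s \<omega> - c \<omega>) * c \<omega> \<partial>M) - (\<integral>\<omega>. (s \<omega> - c \<omega>) * q \<omega> \<partial>M))"
    using i2 i3 i4 j1 j2 j3 j4 by simp
  also have "\<dots> = (\<integral>\<omega>. (s \<omega> - c \<omega>)^2 \<partial>M) + (\<integral>\<omega>. (c \<omega> - q \<omega>)^2 \<partial>M) + (\<integral>\<omega>. (q \<omega> - y \<omega>)^2 \<partial>M)"
    using e1 e2 e3 by simp
  finally show "(\<integral>\<omega>. (s \<omega> - y \<omega>)^2 \<partial>M) = (\<integral>\<omega>. (s \<omega> - c \<omega>)^2 \<partial>M) + (\<integral>\<omega>. (c \<omega> - q \<omega>)^2 \<partial>M)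
       + (\<integral>\<omega>. (q \<omega> - y \<omega>)^2 \<partial>M)" .
  show "integrable M (\<lambda>\<omega>. (s \<omega> - y \<omega>)^2)" "integrable M (\<lambda>\<omega>. (s \<omega> - c \<omega>)^2)"
    "integrable M (\<lambda>\<omega>. (c \<omega> - q \<omega>)^2)" "integrable M (\<lambda>\<omega>. (q \<omega> - y \<omega>)^2)" by fact+
qed


lemma logloss_one:
  fixes s y q c :: "'a \<Rightarrow> real"
  assumes P: "prob_space M"
    and sF: "sigma_finite_subalgebra M F" and sG: "sigma_finite_subalgebra M G" and FG: "subalgebra F G"
    and [measurable]: "s \<in> borel_measurable G" "y \<in> borel_measurable M"
    and y01: "\<forall>\<omega>\<in>space M. y \<omega> = 0 \<or> y \<omega> = 1"
    and qdef: "q = real_cond_exp M F y" and cdef: "c = real_cond_exp M G y"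
    and p1: "AE \<omega> in M. y \<omega> > 0 \<longrightarrow> q \<omega> > 0"
    and p2: "AE \<omega> in M. q \<omega> > 0 \<longrightarrow> c \<omega> > 0"
    and p3: "AE \<omega> in M. c \<omega> > 0 \<longrightarrow> s \<omega> > 0"
    and ib: "integrable M (\<lambda>\<omega>. c \<omega> * ln (c \<omega> / s \<omega>))"
    and ic: "integrable M (\<lambda>\<omega>. q \<omega> * ln (q \<omega> / c \<omega>))"
    and ie: "integrable M (\<lambda>\<omega>. y \<omega> * ln (y \<omega> / q \<omega>))"
  shows "(\<integral>\<omega>. y \<omega> * ln (y \<omega> / s \<omega>) \<partial>M) = (\<integral>\<omega>. c \<omega> * ln (c \<omega> / s \<omega>) \<partial>M)
      + (\<integral>\<omega>. q \<omega> * ln (q \<omega> / c \<omega>) \<partial>M) + (\<integral>\<omega>. y \<omega> * ln (y \<omega> / q \<omega>) \<partial>M)"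
proof -
  interpret prob_space M by fact
  have subF: "subalgebra M F" using sF by (simp add: sigma_finite_subalgebra_def)
  have sFm[measurable]: "s \<in> borel_measurable F" by (rule measurable_from_subalg[OF FG]) simp
  have qF[measurable]: "q \<in> borel_measurable F" unfolding qdef by simp
  have cG[measurable]: "c \<in> borel_measurable G" unfolding cdef by simp
  have cF[measurable]: "c \<in> borel_measurable F" by (rule measurable_from_subalg[OF FG cG])
  have [measurable]: "s \<in> borel_measurable M" by (rule measurable_from_subalg[OF subF sFm])
  have [measurable]: "q \<in> borel_measurable M" unfolding qdef by simp
  have [measurable]: "c \<in> borel_measurable M" unfolding cdef by simp
  have yi: "integrable M y"
    by (rule integrable_const_bound[where B=1]) (use y01 in \<open>auto intro!: AE_I2\<close>)
  have y0: "\<forall>\<omega>\<in>space M. 0 \<le> y \<omega>" using y01 by auto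
  have i1: "integrable M (\<lambda>\<omega>. ln (q \<omega> / c \<omega>) * real_cond_exp M F y \<omega>)"
    using ic unfolding qdef[symmetric] by (simp add: mult.commute)
  have i2: "integrable M (\<lambda>\<omega>. ln (c \<omega> / s \<omega>) * real_cond_exp M G y \<omega>)"
    using ib unfolding cdef[symmetric] by (simp add: mult.commute)
  note r1 = sigma_finite_subalgebra.cond_exp_intg_rev[OF sF _ _ y0 yi i1]
  note r2 = sigma_finite_subalgebra.cond_exp_intg_rev[OF sG _ _ y0 yi i2]
  have ig: "integrable M (\<lambda>\<omega>. ln (q \<omega> / c \<omega>) * y \<omega>)" using r1(1) by simp
  have ih: "integrable M (\<lambda>\<omega>. ln (c \<omega> / s \<omega>) * y \<omega>)" using r2(1) by simp
  have eg: "(\<integral>\<omega>. ln (q \<omega> / c \<omega>) * y \<omega> \<partial>M) = (\<integral>\<omega>. q \<omega> * ln (q \<omega> / c \<omega>) \<partial>M)"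
    using r1(2) unfolding qdef[symmetric] by (simp add: mult.commute)
  have eh: "(\<integral>\<omega>. ln (c \<omega> / s \<omega>) * y \<omega> \<partial>M) = (\<integral>\<omega>. c \<omega> * ln (c \<omega> / s \<omega>) \<partial>M)"
    using r2(2) unfolding cdef[symmetric] by (simp add: mult.commute)
  have "AE \<omega> in M. y \<omega> * ln (y \<omega> / s \<omega>) =
      y \<omega> * ln (y \<omega> / q \<omega>) + ln (q \<omega> / c \<omega>) * y \<omega> + ln (c \<omega> / s \<omega>) * y \<omega>"
    using p1 p2 p3 AE_space
  proof eventually_elim
    case (elim \<omega>)
    then have "y \<omega> = 0 \<or> y \<omega> = 1" using y01 by auto
    then show ?case
    proof
      assume "y \<omega> = 1"
      with elim have "q \<omega> > 0" "c \<omega> > 0" "s \<omega> > 0" by auto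
      with \<open>y \<omega> = 1\<close> show ?thesis by (simp add: ln_div)
    qed simp
  qed
  then have "(\<integral>\<omega>. y \<omega> * ln (y \<omega> / s \<omega>) \<partial>M) =
      (\<integral>\<omega>. y \<omega> * ln (y \<omega> / q \<omega>) + ln (q \<omega> / c \<omega>) * y \<omega> + ln (c \<omega> / s \<omega>) * y \<omega> \<partial>M)"
    by (rule integral_cong_AE[rotated 2]) auto
  also have "\<dots> = (\<integral>\<omega>. y \<omega> * ln (y \<omega> / q \<omega>) \<partial>M) + (\<integral>\<omega>. ln (q \<omega> / c \<omega>) * y \<omega> \<partial>M)
      + (\<integral>\<omega>. ln (c \<omega> / s \<omega>) * y \<omega> \<partial>M)"
    using ie ig ih by simp
  finally show ?thesis using eg eh by simp
qed

theorem proposition6: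
  fixes M :: "'a measure" and N :: "'x measure" and X :: "'a \<Rightarrow> 'x"
    and Y :: "'a \<Rightarrow> nat \<Rightarrow> real" and f :: "'x \<Rightarrow> nat \<Rightarrow> real" and K :: nat
    and d :: "(nat \<Rightarrow> real) \<Rightarrow> (nat \<Rightarrow> real) \<Rightarrow> real"
  assumes M: "prob_space M"
    and X: "X \<in> measurable M N"
    and Y_meas: "\<forall>k<K. (\<lambda>\<omega>. Y \<omega> k) \<in> borel_measurable M"
    and Y_onehot: "\<forall>\<omega>\<in>space M. \<exists>j<K. \<forall>k<K. Y \<omega> k = (if k = j then 1 else 0)"
    and f_meas: "\<forall>k<K. (\<lambda>x. f x k) \<in> borel_measurable N"
    and f_simplex: "\<forall>x\<in>space N. (\<forall>k<K. 0 \<le> f x k) \<and> (\<Sum>k<K. f x k) = 1"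
    and d: "d = brier K \<or> d = logloss K"
  defines "S \<equiv> \<lambda>\<omega> k. f (X \<omega>) k"
    and "Q \<equiv> \<lambda>\<omega> k. real_cond_exp M (vimage_algebra (space M) X N) (\<lambda>\<omega>'. Y \<omega>' k) \<omega>"
    and "C \<equiv> \<lambda>\<omega> k. real_cond_exp M (vimage_algebra (space M) (\<lambda>\<omega>'. f (X \<omega>') k) borel)
                                   (\<lambda>\<omega>'. Y \<omega>' k) \<omega>"
  assumes int_SY: "integrable M (\<lambda>\<omega>. d (S \<omega>) (Y \<omega>))"
    and int_SC: "integrable M (\<lambda>\<omega>. d (S \<omega>) (C \<omega>))"
    and int_CQ: "integrable M (\<lambda>\<omega>. d (C \<omega>) (Q \<omega>))"
    and int_QY: "integrable M (\<lambda>\<omega>. d (Q \<omega>) (Y \<omega>))"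
    and fin_SY: "d = logloss K \<Longrightarrow> AE \<omega> in M. \<forall>k<K. Y \<omega> k > 0 \<longrightarrow> S \<omega> k > 0"
    and fin_SC: "d = logloss K \<Longrightarrow> AE \<omega> in M. \<forall>k<K. C \<omega> k > 0 \<longrightarrow> S \<omega> k > 0"
    and fin_CQ: "d = logloss K \<Longrightarrow> AE \<omega> in M. \<forall>k<K. Q \<omega> k > 0 \<longrightarrow> C \<omega> k > 0"
    and fin_QY: "d = logloss K \<Longrightarrow> AE \<omega> in M. \<forall>k<K. Y \<omega> k > 0 \<longrightarrow> Q \<omega> k > 0"
  shows "(\<integral>\<omega>. d (S \<omega>) (Y \<omega>) \<partial>M)
           = (\<integral>\<omega>. d (S \<omega>) (C \<omega>) \<partial>M) + (\<integral>\<omega>. d (C \<omega>) (Q \<omega>) \<partial>M)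
             + (\<integral>\<omega>. d (Q \<omega>) (Y \<omega>) \<partial>M)"
proof -
  interpret prob_space M by (rule M)
  have fm: "finite_measure M" by unfold_locales
  have Xs: "X \<in> space M \<rightarrow> space N" using measurable_space[OF X] by auto
  define FX where "FX = vimage_algebra (space M) X N"
  define G where "G k = vimage_algebra (space M) (\<lambda>\<omega>. f (X \<omega>) k) borel" for k
  have XFX: "X \<in> measurable FX N" unfolding FX_def by (rule measurable_vimage_algebra1[OF Xs])
  have spFX: "space FX = space M" unfolding FX_def by simp
  have subFX: "subalgebra M FX" unfolding subalgebra_def
    using sets_image_in_sets[OF refl X] spFX by (simp add: FX_def)
  have sFX: "sigma_finite_subalgebra M FX"
    by (intro finite_measure_subalgebra_is_sigma_finite)
       (simp add: finite_measure_subalgebra_def finite_measure_subalgebra_axioms_def subFX fm)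
  have SFX: "(\<lambda>\<omega>. S \<omega> k) \<in> borel_measurable FX" if "k < K" for k
    unfolding S_def using measurable_compose[OF XFX] f_meas that by auto
  have SG: "(\<lambda>\<omega>. S \<omega> k) \<in> borel_measurable (G k)" for k
    unfolding S_def G_def by (rule measurable_vimage_algebra1) simp
  have subFG: "subalgebra FX (G k)" if "k < K" for k
    unfolding subalgebra_def
    using sets_image_in_sets[of FX "space M" "\<lambda>\<omega>. f (X \<omega>) k" borel] SFX[OF that] spFX
    by (simp add: G_def S_def)
  have subG: "subalgebra M (G k)" if "k < K" for k
    using subFG[OF that] subFX unfolding subalgebra_def by auto
  have sG: "sigma_finite_subalgebra M (G k)" if "k < K" for k
    by (intro finite_measure_subalgebra_is_sigma_finite)
       (simp add: finite_measure_subalgebra_def finite_measure_subalgebra_axioms_def subG that fm)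
  have Ym: "(\<lambda>\<omega>. Y \<omega> k) \<in> borel_measurable M" if "k < K" for k using Y_meas that by auto
  have Y01: "\<forall>\<omega>\<in>space M. Y \<omega> k = 0 \<or> Y \<omega> k = 1" if "k < K" for k
    using Y_onehot that by fastforce
  have Yb: "\<forall>\<omega>\<in>space M. 0 \<le> Y \<omega> k \<and> Y \<omega> k \<le> 1" if "k < K" for k
    using Y01[OF that] by fastforce
  have Sb: "\<forall>\<omega>\<in>space M. 0 \<le> S \<omega> k \<and> S \<omega> k \<le> 1" if "k < K" for k
  proof
    fix \<omega> assume w: "\<omega> \<in> space M"
    then have Xw: "X \<omega> \<in> space N" using Xs by auto
    have "f (X \<omega>) k \<le> (\<Sum>j<K. f (X \<omega>) j)"
      using f_simplex Xw that by (intro member_le_sum) auto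
    then show "0 \<le> S \<omega> k \<and> S \<omega> k \<le> 1" using f_simplex Xw that by (auto simp: S_def)
  qed
  have qdef: "(\<lambda>\<omega>. Q \<omega> k) = real_cond_exp M FX (\<lambda>\<omega>. Y \<omega> k)" for k
    by (simp add: Q_def FX_def)
  have cdef: "(\<lambda>\<omega>. C \<omega> k) = real_cond_exp M (G k) (\<lambda>\<omega>. Y \<omega> k)" for k
    by (simp add: C_def G_def S_def)
  have Qm[measurable]: "(\<lambda>\<omega>. Q \<omega> k) \<in> borel_measurable M" for k unfolding qdef by simp
  have Cm[measurable]: "(\<lambda>\<omega>. C \<omega> k) \<in> borel_measurable M" for k unfolding cdef by simp
  have Sm[measurable]: "(\<lambda>\<omega>. S \<omega> k) \<in> borel_measurable M" if "k < K" for k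
    by (rule measurable_from_subalg[OF subFX SFX[OF that]])
  have Yi: "integrable M (\<lambda>\<omega>. Y \<omega> k)" if "k < K" for k
    by (rule integrable_const_bound[where B=1]) (use Yb[OF that] Ym[OF that] in \<open>auto intro!: AE_I2\<close>)
  have Qb: "AE \<omega> in M. 0 \<le> Q \<omega> k \<and> Q \<omega> k \<le> 1" if "k < K" for k
  proof -
    have a0: "AE \<omega> in M. Y \<omega> k \<ge> 0" and a1: "AE \<omega> in M. Y \<omega> k \<le> 1" using Yb[OF that] by auto
    show ?thesis
      using sigma_finite_subalgebra.real_cond_exp_ge_c[OF sFX Yi[OF that] a0]
        sigma_finite_subalgebra.real_cond_exp_le_c[OF sFX Yi[OF that] a1]
      unfolding qdef[symmetric] by auto
  qed
  have Cb: "AE \<omega> in M. 0 \<le> C \<omega> k \<and> C \<omega> k \<le> 1" if "k < K" for k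
  proof -
    have a0: "AE \<omega> in M. Y \<omega> k \<ge> 0" and a1: "AE \<omega> in M. Y \<omega> k \<le> 1" using Yb[OF that] by auto
    show ?thesis
      using sigma_finite_subalgebra.real_cond_exp_ge_c[OF sG[OF that] Yi[OF that] a0]
        sigma_finite_subalgebra.real_cond_exp_le_c[OF sG[OF that] Yi[OF that] a1]
      unfolding cdef[symmetric] by auto
  qed
  from d show ?thesis
  proof
    assume dB: "d = brier K"
    note bo = brier_one[OF M sFX sG subFG SG Ym Yb Sb qdef cdef]
    have "(\<integral>\<omega>. d (S \<omega>) (Y \<omega>) \<partial>M) = (\<Sum>k<K. \<integral>\<omega>. (S \<omega> k - Y \<omega> k)^2 \<partial>M)"
      unfolding dB brier_def by (rule Bochner_Integration.integral_sum) (use bo in auto)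
    also have "\<dots> = (\<Sum>k<K. (\<integral>\<omega>. (S \<omega> k - C \<omega> k)^2 \<partial>M)) + (\<Sum>k<K. \<integral>\<omega>. (C \<omega> k - Q \<omega> k)^2 \<partial>M)
        + (\<Sum>k<K. \<integral>\<omega>. (Q \<omega> k - Y \<omega> k)^2 \<partial>M)"
      by (simp add: bo sum.distrib)
    also have "\<dots> = (\<integral>\<omega>. d (S \<omega>) (C \<omega>) \<partial>M) + (\<integral>\<omega>. d (C \<omega>) (Q \<omega>) \<partial>M)
             + (\<integral>\<omega>. d (Q \<omega>) (Y \<omega>) \<partial>M)"
      unfolding dB brier_def
      by (subst (1 2 3) Bochner_Integration.integral_sum) (use bo in auto)
    finally show ?thesis .
  next
    assume dL: "d = logloss K"
    have QbA: "AE \<omega> in M. \<forall>k\<in>{..<K}. 0 \<le> Q \<omega> k \<and> Q \<omega> k \<le> 1"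
      by (rule eventually_ball_finite) (use Qb in auto)
    have CbA: "AE \<omega> in M. \<forall>k\<in>{..<K}. 0 \<le> C \<omega> k \<and> C \<omega> k \<le> 1"
      by (rule eventually_ball_finite) (use Cb in auto)
    have allA: "AE \<omega> in M. \<omega> \<in> space M \<and> (\<forall>k\<in>{..<K}. 0 \<le> Q \<omega> k \<and> Q \<omega> k \<le> 1)
        \<and> (\<forall>k\<in>{..<K}. 0 \<le> C \<omega> k \<and> C \<omega> k \<le> 1)
        \<and> (\<forall>k<K. Y \<omega> k > 0 \<longrightarrow> S \<omega> k > 0) \<and> (\<forall>k<K. C \<omega> k > 0 \<longrightarrow> S \<omega> k > 0)
        \<and> (\<forall>k<K. Q \<omega> k > 0 \<longrightarrow> C \<omega> k > 0) \<and> (\<forall>k<K. Y \<omega> k > 0 \<longrightarrow> Q \<omega> k > 0)"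
      using AE_space QbA CbA fin_SY[OF dL] fin_SC[OF dL] fin_CQ[OF dL] fin_QY[OF dL]
      by eventually_elim auto
    have lbA: "AE \<omega> in M. \<forall>k<K. Y \<omega> k * ln (Y \<omega> k / S \<omega> k) \<ge> -1
        \<and> C \<omega> k * ln (C \<omega> k / S \<omega> k) \<ge> -1 \<and> Q \<omega> k * ln (Q \<omega> k / C \<omega> k) \<ge> -1
        \<and> Y \<omega> k * ln (Y \<omega> k / Q \<omega> k) \<ge> -1"
      using allA
    proof eventually_elim
      case (elim \<omega>)
      show ?case
      proof (intro allI impI conjI)
        fix k assume k: "k < K"
        have h: "0 \<le> Q \<omega> k" "Q \<omega> k \<le> 1" "0 \<le> C \<omega> k" "C \<omega> k \<le> 1"
          "0 \<le> S \<omega> k" "S \<omega> k \<le> 1" "0 \<le> Y \<omega> k" "Y \<omega> k \<le> 1"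
          "Y \<omega> k > 0 \<longrightarrow> S \<omega> k > 0" "C \<omega> k > 0 \<longrightarrow> S \<omega> k > 0"
          "Q \<omega> k > 0 \<longrightarrow> C \<omega> k > 0" "Y \<omega> k > 0 \<longrightarrow> Q \<omega> k > 0"
          using elim k Sb[OF k] Yb[OF k] by auto
        show "Y \<omega> k * ln (Y \<omega> k / S \<omega> k) \<ge> -1"
          using xlnx_lower[of "Y \<omega> k" "S \<omega> k"] h by linarith
        show "C \<omega> k * ln (C \<omega> k / S \<omega> k) \<ge> -1"
          using xlnx_lower[of "C \<omega> k" "S \<omega> k"] h by linarith
        show "Q \<omega> k * ln (Q \<omega> k / C \<omega> k) \<ge> -1"
          using xlnx_lower[of "Q \<omega> k" "C \<omega> k"] h by linarith
        show "Y \<omega> k * ln (Y \<omega> k / Q \<omega> k) \<ge> -1"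
          using xlnx_lower[of "Y \<omega> k" "Q \<omega> k"] h by linarith
      qed
    qed
    have ia: "integrable M (\<lambda>\<omega>. Y \<omega> k * ln (Y \<omega> k / S \<omega> k))" if "k < K" for k
      by (rule each_int[where h="\<lambda>k \<omega>. Y \<omega> k * ln (Y \<omega> k / S \<omega> k)", OF fm _ _ _ that])
         (use int_SY[unfolded dL logloss_def] Ym Sm lbA in \<open>auto elim!: eventually_mono\<close>)
    have ib: "integrable M (\<lambda>\<omega>. C \<omega> k * ln (C \<omega> k / S \<omega> k))" if "k < K" for k
      by (rule each_int[where h="\<lambda>k \<omega>. C \<omega> k * ln (C \<omega> k / S \<omega> k)", OF fm _ _ _ that])
         (use int_SC[unfolded dL logloss_def] Cm Sm lbA in \<open>auto elim!: eventually_mono\<close>)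
    have ic: "integrable M (\<lambda>\<omega>. Q \<omega> k * ln (Q \<omega> k / C \<omega> k))" if "k < K" for k
      by (rule each_int[where h="\<lambda>k \<omega>. Q \<omega> k * ln (Q \<omega> k / C \<omega> k)", OF fm _ _ _ that])
         (use int_CQ[unfolded dL logloss_def] Qm Cm lbA in \<open>auto elim!: eventually_mono\<close>)
    have ie: "integrable M (\<lambda>\<omega>. Y \<omega> k * ln (Y \<omega> k / Q \<omega> k))" if "k < K" for k
      by (rule each_int[where h="\<lambda>k \<omega>. Y \<omega> k * ln (Y \<omega> k / Q \<omega> k)", OF fm _ _ _ that])
         (use int_QY[unfolded dL logloss_def] Ym Qm lbA in \<open>auto elim!: eventually_mono\<close>)
    have one: "(\<integral>\<omega>. Y \<omega> k * ln (Y \<omega> k / S \<omega> k) \<partial>M) = (\<integral>\<omega>. C \<omega> k * ln (C \<omega> k / S \<omega> k) \<partial>M)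
      + (\<integral>\<omega>. Q \<omega> k * ln (Q \<omega> k / C \<omega> k) \<partial>M) + (\<integral>\<omega>. Y \<omega> k * ln (Y \<omega> k / Q \<omega> k) \<partial>M)"
      if k: "k < K" for k
    proof (rule logloss_one[OF M sFX sG[OF k] subFG[OF k] SG Ym[OF k] Y01[OF k] qdef cdef _ _ _ ib[OF k] ic[OF k] ie[OF k]])
      show "AE \<omega> in M. 0 < Y \<omega> k \<longrightarrow> 0 < Q \<omega> k" using k by (intro eventually_mono[OF allA]) auto
      show "AE \<omega> in M. 0 < Q \<omega> k \<longrightarrow> 0 < C \<omega> k" using k by (intro eventually_mono[OF allA]) auto
      show "AE \<omega> in M. 0 < C \<omega> k \<longrightarrow> 0 < S \<omega> k" using k by (intro eventually_mono[OF allA]) auto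
    qed
    have "(\<integral>\<omega>. d (S \<omega>) (Y \<omega>) \<partial>M) = (\<Sum>k<K. \<integral>\<omega>. Y \<omega> k * ln (Y \<omega> k / S \<omega> k) \<partial>M)"
      unfolding dL logloss_def by (rule Bochner_Integration.integral_sum) (use ia in auto)
    also have "\<dots> = (\<Sum>k<K. (\<integral>\<omega>. C \<omega> k * ln (C \<omega> k / S \<omega> k) \<partial>M))
        + (\<Sum>k<K. \<integral>\<omega>. Q \<omega> k * ln (Q \<omega> k / C \<omega> k) \<partial>M)
        + (\<Sum>k<K. \<integral>\<omega>. Y \<omega> k * ln (Y \<omega> k / Q \<omega> k) \<partial>M)"
      by (simp add: one sum.distrib)
    also have "\<dots> = (\<integral>\<omega>. d (S \<omega>) (C \<omega>) \<partial>M) + (\<integral>\<omega>. d (C \<omega>) (Q \<omega>) \<partial>M)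
             + (\<integral>\<omega>. d (Q \<omega>) (Y \<omega>) \<partial>M)"
      unfolding dL logloss_def
      by (subst (1 2 3) Bochner_Integration.integral_sum) (use ib ic ie in auto)
    finally show ?thesis .
  qed
qed

end
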